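(* Let $n\ge 1$ and $m\ge 0$ be integers and let $r$ be an integer with $0\le r\le m$. Then $$\mathcal Y_n\big(2^{\{r\}},1^{\{m-r\}}\big)=\frac{1}{(r+1)n}\binom{m}{r}\left(\binom{n-1}{m}+(-1)^r\binom{n-1}{m+r+1}\right).$$ That is, the sum of $\mathfrak Z_n(\sigma)$ over all distinct permutations $\sigma$ of the multiset consisting of $r$ copies of $2$ and $m-r$ copies of $1$ equals the right-hand side.
   Context: Let $\zeta_n=e^{2\pi\sqrt{-1}/n}$. For positive integers $s_1,\dots,s_m$, define $\mathfrak Z_n(s_1,\dots,s_m):=\sum_{1\le i_1<\cdots<i_m\le n-1}\prod_{k=1}^{m}(1-\zeta_n^{i_k})^{-s_k}$ (equal to $1$ if $m=0$ and to $0$ if $m>n-1$). Define $\mathcal Y_n(s_1,\dots,s_m):=\sum_{\sigma}\mathfrak Z_n(\sigma)$, where $\sigma$ runs over all distinct rearrangements of $(s_1,\dots,s_m)$; $\mathcal Y_n$ of the empty sequence is $1$. Notation: $a^{\{k\}}$ denotes the block $a,\dots,a$ of length $k$. Binomial coefficients $\binom{a}{b}$ are $0$ when $b<0$ or $b>a\ge0$. *)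

theory Defs
  imports Complex_Main "HOL-Library.Multiset"
begin

definition zeta :: "nat \<Rightarrow> complex" where
  "zeta n = cis (2 * pi / real n)"

text \<open>Z_n(s_1,...,s_m): sum over 1 <= i_1 < ... < i_m <= n-1, i.e. over m-element subsets
  of {1..n-1} listed in increasing order.\<close>
definition frakZ :: "nat \<Rightarrow> nat list \<Rightarrow> complex" where
  "frakZ n s = (\<Sum>I \<in> {I. I \<subseteq> {1..n-1} \<and> card I = length s}.
      \<Prod>k<length s. inverse ((1 - zeta n ^ (sorted_list_of_set I ! k)) ^ (s ! k)))"

definition calY :: "nat \<Rightarrow> nat list \<Rightarrow> complex" where
  "calY n s = (\<Sum>\<sigma> \<in> {xs. mset xs = mset s}. frakZ n \<sigma>)"

end

theory Submission
  imports Defs "HOL-Computational_Algebra.Computational_Algebra"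
begin


lemma zeta_pow: "zeta n ^ k = cis (2 * pi * real k / real n)"
  unfolding zeta_def by (simp add: DeMoivre mult_ac)

lemma roots_prod_poly:
  assumes n: "n \<ge> 1"
  shows "(\<Prod>k<n. [:-(zeta n ^ k), 1:]) = monom 1 n - 1"
proof -
  define p :: "complex poly" where "p = monom 1 n - 1"
  have pe: "poly p z = z ^ n - 1" for z by (simp add: p_def poly_monom)
  have pp: "p = (-1) + monom 1 n" by (simp add: p_def)
  have lc: "lead_coeff p = 1" unfolding pp using n
    by (subst lead_coeff_add_le) (auto simp: degree_monom_eq)
  have pd: "poly (pderiv p) z = of_nat n * z ^ (n - 1)" for z
    by (simp add: p_def pderiv_diff pderiv_monom poly_monom)
  have rsq: "rsquarefree p"
    unfolding rsquarefree_roots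
  proof (intro allI notI)
    fix a assume "poly p a = 0 \<and> poly (pderiv p) a = 0"
    then have "a ^ n = 1" "of_nat n * a ^ (n - 1) = 0" by (auto simp: pe pd)
    then show False using n by (cases "a = 0") (auto simp: power_0_left)
  qed
  have "p = smult (lead_coeff p) (\<Prod>z|poly p z = 0. [:-z, 1:])"
    using complex_poly_decompose_rsquarefree[OF rsq] by simp
  also have "\<dots> = (\<Prod>z\<in>{z. z ^ n = 1}. [:-z, 1:])" by (simp add: lc pe)
  also have "\<dots> = (\<Prod>k<n. [:-(cis (2 * pi * real k / real n)), 1:])"
    using n by (intro prod.reindex_bij_betw[symmetric] bij_betw_roots_unity) auto
  also have "\<dots> = (\<Prod>k<n. [:-(zeta n ^ k), 1:])" by (simp add: zeta_pow)
  finally show ?thesis by (simp add: p_def)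
qed

lemma roots_prod_pt:
  assumes n: "n \<ge> 1"
  shows "(\<Prod>k<n. (z - zeta n ^ k)) = z ^ n - 1"
proof -
  have "poly (\<Prod>k<n. [:-(zeta n ^ k), 1:]) z = poly (monom 1 n - 1) z"
    using roots_prod_poly[OF n] by simp
  then show ?thesis by (simp add: poly_prod poly_monom)
qed

lemma roots_prod1:
  assumes n: "n \<ge> 1"
  shows "(\<Prod>k\<in>{1..n-1}. (z - zeta n ^ k)) = (\<Sum>j<n. z ^ j)"
proof -
  define PP where "PP = (\<Prod>k\<in>{1..n-1}. [:-(zeta n ^ k), 1:])"
  define SS :: "complex poly" where "SS = (\<Sum>j<n. monom 1 j)"
  have split: "{..<n} = insert 0 {1..n-1}" using n by auto
  have "[:-1,1:] * PP = [:-1,1:] * SS"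
  proof (rule poly_ext)
    fix w
    have "poly ([:-1,1:] * PP) w = (\<Prod>k<n. (w - zeta n ^ k))"
      by (simp add: PP_def poly_prod split algebra_simps)
    also have "\<dots> = w ^ n - 1" by (rule roots_prod_pt[OF n])
    also have "\<dots> = (w - 1) * (\<Sum>j<n. w ^ j)" by (rule power_diff_1_eq)
    also have "\<dots> = poly ([:-1,1:] * SS) w" by (simp add: SS_def poly_sum poly_monom algebra_simps)
    finally show "poly ([:-1,1:] * PP) w = poly ([:-1,1:] * SS) w" .
  qed
  moreover have "[:-1,1:] \<noteq> (0::complex poly)" by simp
  ultimately have "PP = SS" using mult_left_cancel by blast
  then have "poly PP z = poly SS z" by simp
  then show ?thesis by (simp add: PP_def SS_def poly_prod poly_sum poly_monom)
qed

lemma roots_prod1_one: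
  assumes n: "n \<ge> 1"
  shows "(\<Prod>k\<in>{1..n-1}. (1 - zeta n ^ k)) = of_nat n"
  using roots_prod1[OF n, of 1] by simp

lemma one_minus_zeta_nz:
  assumes n: "n \<ge> 1" and k: "k \<in> {1..n-1}"
  shows "1 - zeta n ^ k \<noteq> 0"
proof
  assume z: "1 - zeta n ^ k = 0"
  have "(\<Prod>k\<in>{1..n-1}. (1 - zeta n ^ k)) = 0"
    by (rule prod_zero) (use k z in auto)
  then have "(of_nat n::complex) = 0" using roots_prod1_one[OF n] by metis
  then show False using n by simp
qed



type_synonym bp = "complex poly poly"
definition ev :: "bp \<Rightarrow> complex \<Rightarrow> complex \<Rightarrow> complex" where
  "ev P t u = poly (poly P [:t:]) u"
definition TT :: bp where "TT = [:0,1:]"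
definition UU :: bp where "UU = [:[:0,1:]:]"
definition CC :: "complex \<Rightarrow> bp" where "CC c = [:[:c:]:]"

lemma ev_add[simp]: "ev (P + Q) t u = ev P t u + ev Q t u" by (simp add: ev_def)
lemma ev_diff[simp]: "ev (P - Q) t u = ev P t u - ev Q t u" by (simp add: ev_def)
lemma ev_minus[simp]: "ev (- P) t u = - ev P t u" by (simp add: ev_def)
lemma ev_mult[simp]: "ev (P * Q) t u = ev P t u * ev Q t u" by (simp add: ev_def)
lemma ev_power[simp]: "ev (P ^ k) t u = ev P t u ^ k" by (simp add: ev_def)
lemma ev_prod[simp]: "ev (\<Prod>i\<in>A. f i) t u = (\<Prod>i\<in>A. ev (f i) t u)" by (simp add: ev_def poly_prod)
lemma ev_sum[simp]: "ev (\<Sum>i\<in>A. f i) t u = (\<Sum>i\<in>A. ev (f i) t u)" by (simp add: ev_def poly_sum)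
lemma ev_1[simp]: "ev 1 t u = 1" by (simp add: ev_def)
lemma ev_0[simp]: "ev 0 t u = 0" by (simp add: ev_def)
lemma ev_TT[simp]: "ev TT t u = t" by (simp add: ev_def TT_def)
lemma ev_UU[simp]: "ev UU t u = u" by (simp add: ev_def UU_def)
lemma ev_CC[simp]: "ev (CC c) t u = c" by (simp add: ev_def CC_def)

lemma ev_map_poly: "poly (map_poly (\<lambda>c. poly c u) P) t = ev P t u"
  by (induction P) (simp_all add: ev_def map_poly_pCons)

lemma ev_zero:
  assumes "\<And>t u. ev P t u = 0"
  shows "P = 0"
proof -
  have "coeff P k = 0" for k
  proof -
    have "poly (coeff P k) u = 0" for u
    proof -
      have "map_poly (\<lambda>c. poly c u) P = 0"
        using assms by (simp add: ev_map_poly poly_all_0_iff_0[symmetric])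
      then have "coeff (map_poly (\<lambda>c. poly c u) P) k = 0" by simp
      then show ?thesis by (simp add: coeff_map_poly)
    qed
    then show ?thesis using poly_all_0_iff_0 by blast
  qed
  then show ?thesis by (simp add: poly_eq_iff)
qed

lemma ev_eq:
  assumes "\<And>t u. ev P t u = ev Q t u"
  shows "P = Q"
  using ev_zero[of "P - Q"] assms by simp

definition cf :: "bp \<Rightarrow> nat \<Rightarrow> nat \<Rightarrow> complex" where
  "cf P i j = coeff (coeff P j) i"

lemma cf_add[simp]: "cf (P + Q) i j = cf P i j + cf Q i j" by (simp add: cf_def)
lemma cf_diff[simp]: "cf (P - Q) i j = cf P i j - cf Q i j" by (simp add: cf_def)
lemma cf_minus[simp]: "cf (- P) i j = - cf P i j" by (simp add: cf_def)
lemma cf_sum[simp]: "cf (\<Sum>x\<in>A. f x) i j = (\<Sum>x\<in>A. cf (f x) i j)" by (simp add: cf_def coeff_sum)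
lemma cf_CC_mult[simp]: "cf (CC c * P) i j = c * cf P i j" by (simp add: cf_def CC_def)
lemma cf_TT_mult: "cf (TT * P) i j = (if j = 0 then 0 else cf P i (j - 1))"
  by (simp add: cf_def TT_def coeff_pCons split: nat.split)
lemma cf_UU_mult: "cf (UU * P) i j = (if i = 0 then 0 else cf P (i - 1) j)"
  by (simp add: cf_def UU_def coeff_pCons split: nat.split)
lemma cf_CC[simp]: "cf (CC c) i j = (if i = 0 \<and> j = 0 then c else 0)"
  by (simp add: cf_def CC_def coeff_pCons split: nat.split)
lemma cf_1[simp]: "cf 1 i j = (if i = 0 \<and> j = 0 then 1 else 0)"
  by (simp add: cf_def)
lemma cf_mono: "cf (CC c * UU ^ a * TT ^ b) i j = (if i = a \<and> j = b then c else 0)"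
  by (simp add: cf_def CC_def UU_def TT_def poly_const_pow monom_altdef[symmetric] coeff_monom_mult)



fun pw :: "nat \<Rightarrow> bp" where
  "pw 0 = CC 2"
| "pw (Suc 0) = - TT"
| "pw (Suc (Suc N)) = - (TT * pw (Suc N)) - UU * pw N"

lemma ev_pw: "ev (pw N) (-(a+b)) (a*b) = a^N + b^N"
  by (induction N rule: pw.induct) (simp_all add: algebra_simps)

definition omn :: "nat \<Rightarrow> nat \<Rightarrow> nat" where
  "omn i j = ((i+j) choose i) + ((i+j-1) choose j)"

lemma omn_00: "omn 0 0 = 2" by (simp add: omn_def)
lemma omn_0S: "omn 0 (Suc j) = 1" by (simp add: omn_def)
lemma omn_S0: "omn i 0 = 2" by (simp add: omn_def)
lemma omn_SS: "omn (Suc i) (Suc j) = omn (Suc i) j + omn i (Suc j)"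
proof -
  have a: "(Suc i + Suc j) choose Suc i = (Suc i + j choose Suc i) + (i + Suc j choose i)"
    by (simp add: add.commute)
  have b: "(Suc i + Suc j - 1) choose Suc j = (Suc i + j - 1 choose j) + (i + Suc j - 1 choose Suc j)"
    by (simp add: binomial_Suc_Suc[symmetric] del: binomial_Suc_Suc)
  show ?thesis unfolding omn_def a b by simp
qed

lemma cf_pw: "cf (pw N) i j = (if N = 2*i+j then (-1)^(i+j) * of_nat (omn i j) else 0)"
proof (induction N arbitrary: i j rule: pw.induct)
  case 1
  then show ?case by (auto simp: omn_00)
next
  case 2
  then show ?case by (auto simp: cf_def TT_def coeff_pCons omn_0S split: nat.split)
next
  case (3 N)
  show ?case
  proof (cases i)
    case 0
    then show ?thesis
      by (cases j) (auto simp: cf_TT_mult cf_UU_mult 3 omn_0S)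
  next
    case (Suc i')
    then show ?thesis
    proof (cases j)
      case 0
      then show ?thesis using Suc by (auto simp: cf_TT_mult cf_UU_mult 3 omn_S0)
    next
      case (Suc j')
      then show ?thesis using \<open>i = Suc i'\<close>
        by (auto simp: cf_TT_mult cf_UU_mult 3 omn_SS algebra_simps)
    qed
  qed
qed



definition xx :: "nat \<Rightarrow> nat \<Rightarrow> complex" where "xx n i = inverse (1 - zeta n ^ i)"

definition Fp :: "nat \<Rightarrow> bp" where
  "Fp n = (\<Prod>i\<in>{1..n-1}. 1 + CC (xx n i) * TT + CC (xx n i ^ 2) * UU)"

definition RHSp :: "nat \<Rightarrow> bp" where
  "RHSp n = (1 + TT + UU) ^ n + 1 - (\<Sum>N\<le>n. CC (of_nat (n choose N) * (-1) ^ N) * pw N)"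

lemma quad_split: "\<exists>a b :: complex. a + b = p \<and> a * b = q"
proof -
  define s where "s = csqrt (p^2 - 4*q)"
  have s2: "s^2 = p^2 - 4*q" by (simp add: s_def)
  show ?thesis
    by (rule exI[of _ "(p + s)/2"], rule exI[of _ "(p - s)/2"])
       (use s2 in \<open>auto simp: field_simps power2_eq_square\<close>)
qed

lemma binom_neg: "(\<Sum>N\<le>n. of_nat (n choose N) * (-1) ^ N * (a::complex) ^ N) = (1 - a) ^ n"
proof -
  have "(1 - a) ^ n = (-a + 1) ^ n" by simp
  also have "\<dots> = (\<Sum>N\<le>n. of_nat (n choose N) * (-a) ^ N * 1 ^ (n - N))"
    by (rule binomial_ring)
  also have "\<dots> = (\<Sum>N\<le>n. of_nat (n choose N) * (-1) ^ N * a ^ N)"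
    by (rule sum.cong) (simp_all only: power_minus[of a] power_one mult_1_right mult.assoc)
  finally show ?thesis by simp
qed

lemma main_pt:
  assumes n: "n \<ge> 1"
  shows "of_nat n ^ 2 * (a*b) * (\<Prod>i\<in>{1..n-1}. 1 - (a+b) * xx n i + (a*b) * xx n i ^ 2)
       = (1 - (a+b) + a*b) ^ n + 1 - (\<Sum>N\<le>n. of_nat (n choose N) * (-1) ^ N * (a^N + b^N))"
proof -
  define S where "S z = (\<Sum>j<n. z ^ j)" for z :: complex
  have gen: "1 - (a+b) * inverse y + (a*b) * inverse y ^ 2 = (y - a) * (y - b) / y ^ 2"
    if "y \<noteq> 0" for y :: complex
    using that by (simp add: field_simps power2_eq_square)
  have fac: "1 - (a+b) * xx n i + (a*b) * xx n i ^ 2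
      = ((1 - a) - zeta n ^ i) * ((1 - b) - zeta n ^ i) / (1 - zeta n ^ i) ^ 2"
    if i: "i \<in> {1..n-1}" for i
  proof -
    have nz: "1 - zeta n ^ i \<noteq> 0" by (rule one_minus_zeta_nz[OF n i])
    have e: "(1 - zeta n ^ i) - c = (1 - c) - zeta n ^ i" for c by simp
    show ?thesis unfolding xx_def gen[OF nz] e ..
  qed
  have "(\<Prod>i\<in>{1..n-1}. 1 - (a+b) * xx n i + (a*b) * xx n i ^ 2)
      = (\<Prod>i\<in>{1..n-1}. ((1 - a) - zeta n ^ i) * ((1 - b) - zeta n ^ i) / (1 - zeta n ^ i) ^ 2)"
    by (rule prod.cong) (auto simp: fac)
  also have "\<dots> = (\<Prod>i\<in>{1..n-1}. (1 - a) - zeta n ^ i) * (\<Prod>i\<in>{1..n-1}. (1 - b) - zeta n ^ i)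
       / (\<Prod>i\<in>{1..n-1}. 1 - zeta n ^ i) ^ 2"
    by (simp add: prod.distrib prod_dividef prod_power_distrib)
  also have "\<dots> = S (1 - a) * S (1 - b) / of_nat n ^ 2"
    unfolding roots_prod1_one[OF n] roots_prod1[OF n] S_def ..
  finally have P: "(\<Prod>i\<in>{1..n-1}. 1 - (a+b) * xx n i + (a*b) * xx n i ^ 2) = S (1 - a) * S (1 - b) / of_nat n ^ 2" .
  have Sa: "a * S (1 - a) = 1 - (1 - a) ^ n" for a
    using one_diff_power_eq[of "1 - a" n] by (simp add: S_def)
  have L: "of_nat n ^ 2 * (a*b) * (\<Prod>i\<in>{1..n-1}. 1 - (a+b) * xx n i + (a*b) * xx n i ^ 2)
      = (1 - (1 - a) ^ n) * (1 - (1 - b) ^ n)"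
  proof -
    have "of_nat n ^ 2 * (a*b) * (S (1-a) * S (1-b) / of_nat n ^ 2) = (a * S (1-a)) * (b * S (1-b))"
      using n by (simp add: field_simps)
    then show ?thesis unfolding P Sa .
  qed
  have R: "(\<Sum>N\<le>n. of_nat (n choose N) * (-1) ^ N * (a^N + b^N)) = (1 - a) ^ n + (1 - b) ^ n"
    by (simp add: distrib_left sum.distrib binom_neg)
  have Q: "(1 - (a+b) + a*b) ^ n = (1 - a) ^ n * (1 - b) ^ n"
    by (simp add: power_mult_distrib[symmetric] algebra_simps)
  show ?thesis unfolding L R Q by (simp add: algebra_simps)
qed

lemma ev_pw': "ev (pw N) (-a-b) (a*b) = a^N + b^N"
  using ev_pw[of N a b] by simp

lemma main_poly:
  assumes n: "n \<ge> 1"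
  shows "CC (of_nat n ^ 2) * UU * Fp n = RHSp n"
proof (rule ev_eq)
  fix t u :: complex
  obtain a b where ab: "a + b = -t" "a * b = u" using quad_split[of "-t" u] by blast
  then have t: "t = -(a+b)" by simp
  have "ev (CC (of_nat n ^ 2) * UU * Fp n) t u
      = of_nat n ^ 2 * (a*b) * (\<Prod>i\<in>{1..n-1}. 1 - (a+b) * xx n i + (a*b) * xx n i ^ 2)"
    by (simp add: Fp_def t ab(2)[symmetric] algebra_simps)
  also have "\<dots> = (1 - (a+b) + a*b) ^ n + 1 - (\<Sum>N\<le>n. of_nat (n choose N) * (-1) ^ N * (a^N + b^N))"
    by (rule main_pt[OF n])
  also have "\<dots> = ev (RHSp n) t u"
    by (simp add: RHSp_def t ab(2)[symmetric] ev_pw' mult.assoc) (simp add: algebra_simps)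
  finally show "ev (CC (of_nat n ^ 2) * UU * Fp n) t u = ev (RHSp n) t u" .
qed



lemma CC_mult: "CC a * CC b = CC (a * b)" by (simp add: CC_def)
lemma CC_1: "CC 1 = 1" by (simp add: CC_def one_pCons)
lemma CC_prod: "(\<Prod>i\<in>A. CC (f i)) = CC (\<Prod>i\<in>A. f i)"
  by (induction A rule: infinite_finite_induct) (simp_all add: CC_1 CC_mult)

definition Dsum :: "nat \<Rightarrow> nat \<Rightarrow> nat \<Rightarrow> complex" where
  "Dsum n r s = (\<Sum>B\<in>Pow {1..n-1}. \<Sum>R\<in>Pow B.
     (if r = card R \<and> s = card (B - R) then (\<Prod>i\<in>R. xx n i ^ 2) * (\<Prod>i\<in>B - R. xx n i) else 0))"

lemma cf_Fp: "cf (Fp n) r s = Dsum n r s"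
proof -
  have fin: "finite {1..n-1}" by simp
  have "Fp n = (\<Prod>i\<in>{1..n-1}. (CC (xx n i ^ 2) * UU + CC (xx n i) * TT) + 1)"
    unfolding Fp_def by (simp add: algebra_simps)
  also have "\<dots> = (\<Sum>B\<in>Pow {1..n-1}. \<Prod>i\<in>B. CC (xx n i ^ 2) * UU + CC (xx n i) * TT)"
    by (subst prod_add[OF fin]) simp
  also have "\<dots> = (\<Sum>B\<in>Pow {1..n-1}. \<Sum>R\<in>Pow B.
       CC ((\<Prod>i\<in>R. xx n i ^ 2) * (\<Prod>i\<in>B - R. xx n i)) * UU ^ card R * TT ^ card (B - R))"
  proof (rule sum.cong[OF refl])
    fix B assume "B \<in> Pow {1..n-1}"
    then have finB: "finite B" using finite_subset fin by blast
    have "(\<Prod>i\<in>B. CC (xx n i ^ 2) * UU + CC (xx n i) * TT)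
      = (\<Sum>R\<in>Pow B. (\<Prod>i\<in>R. CC (xx n i ^ 2) * UU) * (\<Prod>i\<in>B - R. CC (xx n i) * TT))"
      by (rule prod_add[OF finB])
    also have "\<dots> = (\<Sum>R\<in>Pow B.
       CC ((\<Prod>i\<in>R. xx n i ^ 2) * (\<Prod>i\<in>B - R. xx n i)) * UU ^ card R * TT ^ card (B - R))"
      by (rule sum.cong[OF refl]) (simp add: prod.distrib CC_prod CC_mult[symmetric] mult_ac)
    finally show "(\<Prod>i\<in>B. CC (xx n i ^ 2) * UU + CC (xx n i) * TT) = \<dots>" .
  qed
  finally show ?thesis unfolding Dsum_def by (simp add: cf_mono)
qed

lemma coeff_11_pow: "coeff ([:1, 1:] ^ k) i = (of_nat (k choose i) :: complex)"
proof (cases "i \<le> k")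
  case True
  then show ?thesis by (simp add: coeff_linear_poly_power)
next
  case False
  then have "degree ([:1, 1:] ^ k :: complex poly) < i"
    using degree_power_le[of "[:1,1::complex:]" k] by simp
  then show ?thesis using False by (simp add: coeff_eq_0)
qed

lemma TT_pow_const: "TT ^ k * [:q:] = monom q k"
  by (simp add: TT_def monom_altdef)

lemma cf_monom: "cf (monom q k) i j = (if j = k then coeff q i else 0)"
  by (simp add: cf_def coeff_monom)

lemma cf_trinom: "cf ((1 + TT + UU) ^ n) i j = of_nat (n choose j) * of_nat ((n - j) choose i)"
proof -
  have "(1 + TT + UU) ^ n = (TT + (1 + UU)) ^ n" by (simp add: algebra_simps)
  also have "\<dots> = (\<Sum>k\<le>n. of_nat (n choose k) * TT ^ k * (1 + UU) ^ (n - k))"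
    by (rule binomial_ring)
  also have "\<dots> = (\<Sum>k\<le>n. CC (of_nat (n choose k)) * monom ([:1,1:] ^ (n - k)) k)"
    by (rule sum.cong[OF refl])
       (simp add: UU_def CC_def of_nat_poly one_pCons poly_const_pow TT_pow_const[symmetric] mult_ac)
  finally have e: "(1 + TT + UU) ^ n = \<dots>" .
  show ?thesis
    unfolding e cf_sum cf_CC_mult cf_monom
    by (simp add: coeff_11_pow if_distrib[of "\<lambda>x. _ * x"] binomial_eq_0 cong: if_cong)
qed



lemma sign_lem: "(-1::complex) ^ (2 * (r + 1) + s) * (-1) ^ (r + 1 + s) = - ((-1) ^ r)"
proof -
  have "(-1::complex) ^ (2 * (r + 1) + s) * (-1) ^ (r + 1 + s) = ((-1) ^ 2) ^ (r + 1 + s) * (-1) ^ (r + 1)"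
    by (simp only: power_add[symmetric] power_mult[symmetric]) (simp add: algebra_simps)
  then show ?thesis by simp
qed

lemma coef_eq:
  assumes n: "n \<ge> 1"
  shows "of_nat n ^ 2 * Dsum n r s = of_nat (n choose s) * of_nat ((n - s) choose (r + 1))
      + (-1) ^ r * of_nat (n choose (2 * (r + 1) + s)) * of_nat (omn (r + 1) s)"
proof -
  define K where "K = 2 * (r + 1) + s"
  define SS where "SS = (\<Sum>N\<le>n. of_nat (n choose N) * (-1) ^ N * (if N = K then (-1) ^ (r + 1 + s) * of_nat (omn (r + 1) s) else (0::complex)))"
  have h1: "cf (CC (of_nat n ^ 2) * UU * Fp n) (r + 1) s = cf (RHSp n) (r + 1) s"
    using main_poly[OF n] by simp
  have h2: "cf (CC (of_nat n ^ 2) * UU * Fp n) (r + 1) s = of_nat n ^ 2 * Dsum n r s"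
    by (simp add: mult.assoc cf_UU_mult cf_Fp)
  have h3: "cf (RHSp n) (r + 1) s = of_nat (n choose s) * of_nat ((n - s) choose (r + 1)) - SS"
    unfolding RHSp_def SS_def by (simp add: cf_trinom cf_pw K_def mult.assoc cong: if_cong)
  have h4: "SS = of_nat (n choose K) * ((-1) ^ K * (-1) ^ (r + 1 + s)) * of_nat (omn (r + 1) s)"
    unfolding SS_def
    by (cases "K \<le> n") (simp_all add: if_distrib[of "\<lambda>x. _ * x"] binomial_eq_0 mult_ac cong: if_cong)
  have h5: "SS = - ((-1) ^ r * of_nat (n choose K) * of_nat (omn (r + 1) s))"
    unfolding h4 K_def sign_lem by simp
  have "of_nat n ^ 2 * Dsum n r s = of_nat (n choose s) * of_nat ((n - s) choose (r + 1)) - SS"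
    using h1 h2 h3 by simp
  then show ?thesis unfolding h5 K_def by simp
qed



lemma stb: "Suc k * (n choose Suc k) = n * ((n - 1) choose k)"
proof (cases n)
  case 0
  then show ?thesis by simp
next
  case (Suc n')
  then show ?thesis using Suc_times_binomial[of k n'] by (simp only: Suc diff_Suc_1)
qed

lemma I1:
  assumes n: "n \<ge> 1" and rm: "r \<le> m"
  shows "(r + 1) * ((n choose (m - r)) * ((n - (m - r)) choose (r + 1))) = n * ((m choose r) * ((n - 1) choose m))"
proof (cases "m + 1 \<le> n")
  case True
  have cm: "(n choose (m + 1)) * ((m + 1) choose (m - r)) = (n choose (m - r)) * ((n - (m - r)) choose (m + 1 - (m - r)))"
    by (rule choose_mult) (use True in auto)
  have e1: "m + 1 - (m - r) = r + 1" using rm by simp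
  have e2: "(m + 1) choose (m - r) = (m + 1) choose (r + 1)"
    using binomial_symmetric[of "r + 1" "m + 1"] rm by (simp add: Suc_diff_le)
  have e3: "(r + 1) * ((m + 1) choose (r + 1)) = (m + 1) * (m choose r)"
    using Suc_times_binomial[of r m] by simp
  have e4: "(m + 1) * (n choose (m + 1)) = n * ((n - 1) choose m)"
    using stb[of m n] by simp
  have "(r + 1) * ((n choose (m - r)) * ((n - (m - r)) choose (r + 1)))
      = (r + 1) * ((n choose (m + 1)) * ((m + 1) choose (r + 1)))"
    using cm e1 e2 by simp
  also have "\<dots> = (n choose (m + 1)) * ((r + 1) * ((m + 1) choose (r + 1)))" by (rule mult.left_commute)
  also have "\<dots> = ((m + 1) * (n choose (m + 1))) * (m choose r)" unfolding e3 by (simp only: mult_ac)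
  also have "\<dots> = n * ((m choose r) * ((n - 1) choose m))" unfolding e4 by simp
  finally show ?thesis .
next
  case False
  then have z: "(n - 1) choose m = 0" using n by (simp add: binomial_eq_0)
  have "(n choose (m - r)) * ((n - (m - r)) choose (r + 1)) = 0"
  proof (cases "m - r \<le> n")
    case True
    then have "n - (m - r) < r + 1" using False rm by linarith
    then show ?thesis by (simp add: binomial_eq_0)
  next
    case False
    then show ?thesis by (simp add: binomial_eq_0)
  qed
  then show ?thesis using z by (metis mult_0_right)
qed

lemma I2:
  assumes n: "n \<ge> 1" and rm: "r \<le> m"
  shows "(r + 1) * ((n choose (2 * (r + 1) + (m - r))) * omn (r + 1) (m - r)) = n * ((m choose r) * ((n - 1) choose (m + r + 1)))"
proof -
  have K: "2 * (r + 1) + (m - r) = Suc (m + r + 1)" using rm by simp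
  have om: "omn (r + 1) (m - r) = ((m + 1) choose (r + 1)) + (m choose r)"
    unfolding omn_def using rm binomial_symmetric[of r m] by (simp add: Suc_diff_le)
  have e3: "(r + 1) * ((m + 1) choose (r + 1)) = (m + 1) * (m choose r)"
    using Suc_times_binomial[of r m] by simp
  have "(r + 1) * omn (r + 1) (m - r) = Suc (m + r + 1) * (m choose r)"
    unfolding om using e3 by (simp add: algebra_simps)
  moreover have "Suc (m + r + 1) * (n choose Suc (m + r + 1)) = n * ((n - 1) choose (m + r + 1))"
    by (rule stb)
  ultimately show ?thesis unfolding K
    by (metis (no_types, lifting) mult.assoc mult.commute)
qed

lemma Dsum_closed:
  assumes n: "n \<ge> 1" and rm: "r \<le> m"
  shows "Dsum n r (m - r) = of_real (1 / (real (r + 1) * real n) * real (m choose r) *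
      (real ((n - 1) choose m) + (-1) ^ r * real ((n - 1) choose (m + r + 1))))"
proof -
  define s where "s = m - r"
  have ce: "of_nat n ^ 2 * Dsum n r s = of_nat (n choose s) * of_nat ((n - s) choose (r + 1))
      + (-1) ^ r * of_nat (n choose (2 * (r + 1) + s)) * of_nat (omn (r + 1) s)"
    by (rule coef_eq[OF n])
  have i1: "of_nat (r + 1) * (of_nat (n choose s) * of_nat ((n - s) choose (r + 1)))
      = (of_nat n * (of_nat (m choose r) * of_nat ((n - 1) choose m)) :: complex)"
    using arg_cong[OF I1[OF n rm], of "of_nat :: nat \<Rightarrow> complex"] unfolding s_def of_nat_mult .
  have i2: "of_nat (r + 1) * (of_nat (n choose (2 * (r + 1) + s)) * of_nat (omn (r + 1) s))
      = (of_nat n * (of_nat (m choose r) * of_nat ((n - 1) choose (m + r + 1))) :: complex)"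
    using arg_cong[OF I2[OF n rm], of "of_nat :: nat \<Rightarrow> complex"] unfolding s_def of_nat_mult .
  have pre: "of_nat (r + 1) * (of_nat n ^ 2 * Dsum n r s)
      = of_nat n * (of_nat (m choose r) * of_nat ((n - 1) choose m))
        + (-1) ^ r * (of_nat n * (of_nat (m choose r) * of_nat ((n - 1) choose (m + r + 1))))"
    unfolding ce distrib_left i1 i2[symmetric] by (simp add: algebra_simps)
  define Y :: complex where "Y = of_nat (m choose r) * of_nat ((n - 1) choose m)
        + (-1) ^ r * (of_nat (m choose r) * of_nat ((n - 1) choose (m + r + 1)))"
  from pre have "of_nat n * (of_nat (r + 1) * of_nat n * Dsum n r s) = of_nat n * Y"
    unfolding Y_def by (simp add: power2_eq_square algebra_simps)
  then have "of_nat (r + 1) * of_nat n * Dsum n r s = Y" using n by simp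
  moreover have nz: "of_nat (r + 1) * of_nat n \<noteq> (0::complex)"
  proof -
    have "(of_nat (r + 1) :: complex) \<noteq> 0" using of_nat_eq_0_iff[of "r + 1", where 'a=complex] by linarith
    moreover have "(of_nat n :: complex) \<noteq> 0" using n by simp
    ultimately show ?thesis by simp
  qed
  ultimately have "Dsum n r s = Y / (of_nat (r + 1) * of_nat n)"
    by (metis nonzero_mult_div_cancel_left)
  then show ?thesis unfolding s_def Y_def by (simp add: field_simps)
qed



lemma cnt_filter: "count (mset xs) a = length (filter (\<lambda>y. y = a) xs)"
  by (induction xs) auto

lemma cnt_card: "count (mset xs) a = card {k. k < length xs \<and> xs ! k = a}"
  unfolding cnt_filter by (simp add: length_filter_conv_card)

lemma S_char:
  assumes rm: "r \<le> m"
  shows "mset xs = mset (replicate r (2::nat) @ replicate (m - r) 1) \<longleftrightarrow>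
    length xs = m \<and> set xs \<subseteq> {1, 2} \<and> count (mset xs) 2 = r"
proof
  assume h: "mset xs = mset (replicate r (2::nat) @ replicate (m - r) 1)"
  have "length xs = m" using arg_cong[OF h, of size] rm by simp
  moreover have "set xs \<subseteq> {1, 2}"
    using arg_cong[OF h, of set_mset] by (auto split: if_splits)
  moreover have "count (mset xs) 2 = r" using h by simp
  ultimately show "length xs = m \<and> set xs \<subseteq> {1, 2} \<and> count (mset xs) 2 = r" by blast
next
  assume h: "length xs = m \<and> set xs \<subseteq> {1, 2} \<and> count (mset xs) 2 = r"
  have c1: "count (mset xs) 1 = m - r"
  proof -
    have "length (filter (\<lambda>y. y = 2) xs) + length (filter (\<lambda>y. \<not> y = 2) xs) = length xs"
      by (rule sum_length_filter_compl)
    moreover have "filter (\<lambda>y. \<not> y = 2) xs = filter (\<lambda>y. y = 1) xs"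
      using h by (intro filter_cong) auto
    ultimately show ?thesis using h unfolding cnt_filter by simp
  qed
  show "mset xs = mset (replicate r (2::nat) @ replicate (m - r) 1)"
  proof (rule multiset_eqI)
    fix a :: nat
    show "count (mset xs) a = count (mset (replicate r 2 @ replicate (m - r) 1)) a"
    proof (cases "a = 1 \<or> a = 2")
      case True
      then show ?thesis using h c1 by auto
    next
      case False
      then have "a \<notin> set xs" using h by auto
      then show ?thesis using False by simp
    qed
  qed
qed

definition HH :: "nat \<Rightarrow> nat set \<Rightarrow> nat list \<Rightarrow> complex" where
  "HH n I \<sigma> = (\<Prod>k<length \<sigma>. inverse ((1 - zeta n ^ (sorted_list_of_set I ! k)) ^ (\<sigma> ! k)))"

definition GG :: "nat \<Rightarrow> nat set \<Rightarrow> nat set \<Rightarrow> complex" where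
  "GG n I R = (\<Prod>i\<in>R. xx n i ^ 2) * (\<Prod>i\<in>I - R. xx n i)"

lemma fixed_I:
  assumes finI: "finite I" and cI: "card I = m" and rm: "r \<le> m"
  shows "(\<Sum>\<sigma>\<in>{xs. length xs = m \<and> set xs \<subseteq> {1, 2} \<and> count (mset xs) 2 = r}. HH n I \<sigma>)
       = (\<Sum>R\<in>{R. R \<subseteq> I \<and> card R = r}. GG n I R)"
proof -
  define L where "L = sorted_list_of_set I"
  have dL: "distinct L" and sL: "set L = I" and lL: "length L = m"
    using finI cI by (auto simp: L_def)
  have injL: "\<And>k k'. k < m \<Longrightarrow> k' < m \<Longrightarrow> L ! k = L ! k' \<longleftrightarrow> k = k'"
    using dL lL by (simp add: nth_eq_iff_index_eq)
  define hm where "hm \<sigma> = (\<lambda>k. L ! k) ` {k. k < m \<and> \<sigma> ! k = (2::nat)}" for \<sigma>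
  define gm where "gm R = map (\<lambda>y. if y \<in> R then 2 else (1::nat)) L" for R
  define S where "S = {xs :: nat list. length xs = m \<and> set xs \<subseteq> {1, 2} \<and> count (mset xs) 2 = r}"
  define T where "T = {R. R \<subseteq> I \<and> card R = r}"
  have mem_hm: "L ! k \<in> hm \<sigma> \<longleftrightarrow> \<sigma> ! k = 2" if "k < m" for k and \<sigma> :: "nat list"
    using that injL unfolding hm_def by auto
  have sig_k: "\<sigma> ! k = (if L ! k \<in> hm \<sigma> then 2 else 1)" if "\<sigma> \<in> S" "k < m" for \<sigma> :: "nat list" and k
  proof -
    have "\<sigma> ! k \<in> set \<sigma>" using that by (simp add: S_def)
    then have "\<sigma> ! k \<in> {1, 2}" using that unfolding S_def by blast
    then show ?thesis using mem_hm[OF that(2)] by auto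
  qed
  show ?thesis
    unfolding S_def[symmetric] T_def[symmetric]
  proof (rule sum.reindex_bij_witness[where i = gm and j = hm])
    fix \<sigma> assume s: "\<sigma> \<in> S"
    show "gm (hm \<sigma>) = \<sigma>"
    proof (rule nth_equalityI)
      show "length (gm (hm \<sigma>)) = length \<sigma>" using s lL by (simp add: gm_def S_def)
      fix k assume "k < length (gm (hm \<sigma>))"
      then have k: "k < m" using lL by (simp add: gm_def)
      show "gm (hm \<sigma>) ! k = \<sigma> ! k" using sig_k[OF s k] k lL by (simp add: gm_def)
    qed
    show "hm \<sigma> \<in> T"
    proof -
      have "hm \<sigma> \<subseteq> I" unfolding hm_def using lL sL by auto
      moreover have "card (hm \<sigma>) = card {k. k < m \<and> \<sigma> ! k = 2}"
        unfolding hm_def by (rule card_image) (auto simp: inj_on_def injL)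
      moreover have "card {k. k < m \<and> \<sigma> ! k = 2} = r"
        using s unfolding S_def cnt_card by auto
      ultimately show ?thesis by (simp add: T_def)
    qed
    show "GG n I (hm \<sigma>) = HH n I \<sigma>"
    proof -
      define e where "e y = inverse ((1 - zeta n ^ y) ^ (if y \<in> hm \<sigma> then 2 else 1))" for y
      have "HH n I \<sigma> = (\<Prod>k<m. e (L ! k))"
        unfolding HH_def L_def[symmetric] using s
        by (intro prod.cong) (auto simp: S_def e_def sig_k[OF s])
      also have "\<dots> = (\<Prod>y\<in>I. e y)"
        by (rule prod.reindex_bij_betw) (rule bij_betw_nth; use dL lL sL in auto)
      also have "\<dots> = (\<Prod>y\<in>I - hm \<sigma>. e y) * (\<Prod>y\<in>hm \<sigma>. e y)"
        by (rule prod.subset_diff) (use \<open>hm \<sigma> \<in> T\<close> finI in \<open>auto simp: T_def\<close>)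
      also have "\<dots> = GG n I (hm \<sigma>)"
        unfolding GG_def e_def xx_def by (simp add: power_inverse mult.commute)
      finally show ?thesis by simp
    qed
  next
    fix R assume R: "R \<in> T"
    show "hm (gm R) = R"
    proof -
      have "hm (gm R) = (\<lambda>k. L ! k) ` {k. k < m \<and> L ! k \<in> R}"
        unfolding hm_def gm_def using lL by (intro image_cong Collect_cong) (auto split: if_splits)
      also have "\<dots> = R"
      proof
        show "(\<lambda>k. L ! k) ` {k. k < m \<and> L ! k \<in> R} \<subseteq> R" by auto
        show "R \<subseteq> (\<lambda>k. L ! k) ` {k. k < m \<and> L ! k \<in> R}"
        proof
          fix y assume y: "y \<in> R"
          then have "y \<in> set L" using R sL by (auto simp: T_def)
          then obtain k where "k < length L" "L ! k = y" by (auto simp: in_set_conv_nth)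
          then show "y \<in> (\<lambda>k. L ! k) ` {k. k < m \<and> L ! k \<in> R}" using y lL by auto
        qed
      qed
      finally show ?thesis .
    qed
    show "gm R \<in> S"
    proof -
      have "count (mset (gm R)) 2 = length (filter (\<lambda>y. y \<in> R) L)"
        unfolding cnt_filter gm_def by (simp add: filter_map o_def)
      also have "\<dots> = card (set (filter (\<lambda>y. y \<in> R) L))"
        by (rule distinct_card[symmetric]) (simp add: dL)
      also have "set (filter (\<lambda>y. y \<in> R) L) = R" using R sL by (auto simp: T_def)
      finally have "count (mset (gm R)) 2 = r" using R by (simp add: T_def)
      then show ?thesis using lL by (auto simp: S_def gm_def)
    qed
  qed
qed



lemma Dsum_alt:
  assumes rm: "r \<le> m"
  shows "Dsum n r (m - r) = (\<Sum>B\<in>{B. B \<subseteq> {1..n-1} \<and> card B = m}. \<Sum>R\<in>{R. R \<subseteq> B \<and> card R = r}. GG n B R)"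
proof -
  have "Dsum n r (m - r) = (\<Sum>B\<in>Pow {1..n-1}. if card B = m then (\<Sum>R\<in>{R. R \<subseteq> B \<and> card R = r}. GG n B R) else 0)"
    unfolding Dsum_def
  proof (rule sum.cong[OF refl])
    fix B assume B: "B \<in> Pow {1..n-1}"
    then have finB: "finite B" using finite_subset by blast
    have "(\<Sum>R\<in>Pow B. if r = card R \<and> m - r = card (B - R) then (\<Prod>i\<in>R. xx n i ^ 2) * (\<Prod>i\<in>B - R. xx n i) else 0)
        = (\<Sum>R\<in>Pow B. if card B = m then (if card R = r then GG n B R else 0) else 0)"
    proof (rule sum.cong[OF refl])
      fix R assume R: "R \<in> Pow B"
      then have "card (B - R) = card B - card R" using finB by (simp add: card_Diff_subset finite_subset)
      moreover have "card R \<le> card B" using R finB by (simp add: card_mono)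
      ultimately show "(if r = card R \<and> m - r = card (B - R) then (\<Prod>i\<in>R. xx n i ^ 2) * (\<Prod>i\<in>B - R. xx n i) else 0)
          = (if card B = m then (if card R = r then GG n B R else 0) else 0)"
        using rm by (auto simp: GG_def)
    qed
    also have "\<dots> = (if card B = m then (\<Sum>R\<in>{R. R \<subseteq> B \<and> card R = r}. GG n B R) else 0)"
    proof -
      have "(\<Sum>R\<in>Pow B. if card R = r then GG n B R else 0) = (\<Sum>R\<in>{R \<in> Pow B. card R = r}. GG n B R)"
        by (rule sum.inter_filter[symmetric]) (simp add: finB)
      also have "{R \<in> Pow B. card R = r} = {R. R \<subseteq> B \<and> card R = r}" by auto
      finally show ?thesis by simp
    qed
    finally show "(\<Sum>R\<in>Pow B. if r = card R \<and> m - r = card (B - R) then (\<Prod>i\<in>R. xx n i ^ 2) * (\<Prod>i\<in>B - R. xx n i) else 0)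
        = (if card B = m then (\<Sum>R\<in>{R. R \<subseteq> B \<and> card R = r}. GG n B R) else 0)" .
  qed
  also have "\<dots> = (\<Sum>B\<in>{B \<in> Pow {1..n-1}. card B = m}. \<Sum>R\<in>{R. R \<subseteq> B \<and> card R = r}. GG n B R)"
    by (rule sum.inter_filter[symmetric]) simp
  also have "{B \<in> Pow {1..n-1}. card B = m} = {B. B \<subseteq> {1..n-1} \<and> card B = m}" by auto
  finally show ?thesis .
qed

lemma calY_eq:
  assumes rm: "r \<le> m"
  shows "calY n (replicate r 2 @ replicate (m - r) 1) = Dsum n r (m - r)"
proof -
  define S where "S = {xs :: nat list. length xs = m \<and> set xs \<subseteq> {1, 2} \<and> count (mset xs) 2 = r}"
  define Im where "Im = {I. I \<subseteq> {1..n-1} \<and> card I = m}"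
  have "calY n (replicate r 2 @ replicate (m - r) 1) = (\<Sum>\<sigma>\<in>S. frakZ n \<sigma>)"
    unfolding calY_def S_def using S_char[OF rm] by simp
  also have "\<dots> = (\<Sum>\<sigma>\<in>S. \<Sum>I\<in>Im. HH n I \<sigma>)"
    by (rule sum.cong[OF refl]) (simp add: frakZ_def HH_def Im_def S_def)
  also have "\<dots> = (\<Sum>I\<in>Im. \<Sum>\<sigma>\<in>S. HH n I \<sigma>)" by (rule sum.swap)
  also have "\<dots> = (\<Sum>I\<in>Im. \<Sum>R\<in>{R. R \<subseteq> I \<and> card R = r}. GG n I R)"
  proof (rule sum.cong[OF refl])
    fix I assume "I \<in> Im"
    then have "finite I" "card I = m" unfolding Im_def using finite_subset by auto
    then show "(\<Sum>\<sigma>\<in>S. HH n I \<sigma>) = (\<Sum>R\<in>{R. R \<subseteq> I \<and> card R = r}. GG n I R)"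
      unfolding S_def by (rule fixed_I[OF _ _ rm])
  qed
  also have "\<dots> = Dsum n r (m - r)" unfolding Im_def by (rule Dsum_alt[OF rm, symmetric])
  finally show ?thesis .
qed

theorem theorem6:
  fixes n m r :: nat
  assumes "n \<ge> 1" and "r \<le> m"
  shows "calY n (replicate r 2 @ replicate (m - r) 1) =
    of_real (1 / (real (r + 1) * real n) * real (m choose r) *
      (real ((n - 1) choose m) + (-1) ^ r * real ((n - 1) choose (m + r + 1))))"
  using calY_eq[OF assms(2)] Dsum_closed[OF assms] by simp

end
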